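(* Let $d$ be a positive integer and let $A\in\mathbb{R}^{[m]\times[2]}$ be a matrix that does not have an elimination ordering. Then there exists $b\in\mathbb{R}^{[m]}$ such that the solution graph $G(R(A,b))$ is not connected.
   Context: Fix a positive integer $d$ and let $D=\{0,1,\dots,d\}$; $[n]=\{1,\dots,n\}$. For $A\in\mathbb{R}^{[m]\times[n]}$ and $b\in\mathbb{R}^{[m]}$, $R(A,b)=\{x\in D^{[n]} : Ax\ge b\}$. For $R\subseteq D^{[n]}$, the solution graph $G(R)$ is the undirected graph with vertex set $R$ in which $x,y$ are adjacent iff they differ in exactly one coordinate. A matrix $A=(a_{ij})$ with column index set $J$ can be eliminated at column $j\in J$ if (i) for every row $i$ with $a_{ij}>0$ we have $a_{ij'}=0$ for all $j'\in J\setminus\{j\}$, or (ii) for every row $i$ with $a_{ij}<0$ we have $a_{ij'}=0$ for all $j'\in J\setminus\{j\}$. For $J'\subseteq[n]$, $\mathrm{elm}(A,J')$ is the submatrix of $A$ obtained by deleting the columns indexed by $J'$. A sequence $(j_1,\dots,j_n)$ of the elements of $[n]$ is an elimination ordering (EO) of $A$ if for every $t\in[n]$ the matrix $\mathrm{elm}(A,\{j_1,\dots,j_{t-1}\})$ can be eliminated at column $j_t$. *)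

theory Defs
  imports Complex_Main
begin

text \<open>Matrices A in R^([m] x [n]) are functions nat => nat => real, of which only
  rows 1..m and columns 1..n matter; vectors b in R^[m] are functions nat => real
  (entries 1..m matter).\<close>

definition can_elim :: "(nat \<Rightarrow> nat \<Rightarrow> real) \<Rightarrow> nat \<Rightarrow> nat set \<Rightarrow> nat \<Rightarrow> bool" where
  "can_elim A m J j \<longleftrightarrow>
     (\<forall>i\<in>{1..m}. A i j > 0 \<longrightarrow> (\<forall>j'\<in>J - {j}. A i j' = 0)) \<or>
     (\<forall>i\<in>{1..m}. A i j < 0 \<longrightarrow> (\<forall>j'\<in>J - {j}. A i j' = 0))"

text \<open>elm(A, {j_1..j_(t-1)}) has column index set [n] minus those columns.\<close>
definition is_EO :: "(nat \<Rightarrow> nat \<Rightarrow> real) \<Rightarrow> nat \<Rightarrow> nat \<Rightarrow> nat list \<Rightarrow> bool" where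
  "is_EO A m n js \<longleftrightarrow>
     distinct js \<and> set js = {1..n} \<and>
     (\<forall>t < n. can_elim A m ({1..n} - set (take t js)) (js ! t))"

definition has_EO :: "(nat \<Rightarrow> nat \<Rightarrow> real) \<Rightarrow> nat \<Rightarrow> nat \<Rightarrow> bool" where
  "has_EO A m n \<longleftrightarrow> (\<exists>js. is_EO A m n js)"

definition box :: "nat \<Rightarrow> nat \<Rightarrow> (nat \<Rightarrow> nat) set" where
  "box d n = {x. (\<forall>j\<in>{1..n}. x j \<le> d) \<and> (\<forall>j. j \<notin> {1..n} \<longrightarrow> x j = 0)}"

definition solset :: "nat \<Rightarrow> (nat \<Rightarrow> nat \<Rightarrow> real) \<Rightarrow> nat \<Rightarrow> nat \<Rightarrow> (nat \<Rightarrow> real) \<Rightarrow> (nat \<Rightarrow> nat) set" where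
  "solset d A m n b = {x \<in> box d n. \<forall>i\<in>{1..m}. (\<Sum>j=1..n. A i j * real (x j)) \<ge> b i}"

definition adjacent :: "nat \<Rightarrow> (nat \<Rightarrow> nat) \<Rightarrow> (nat \<Rightarrow> nat) \<Rightarrow> bool" where
  "adjacent n x y \<longleftrightarrow> card {j\<in>{1..n}. x j \<noteq> y j} = 1"

definition sol_edges :: "nat \<Rightarrow> (nat \<Rightarrow> nat) set \<Rightarrow> ((nat \<Rightarrow> nat) \<times> (nat \<Rightarrow> nat)) set" where
  "sol_edges n R = {(x, y). x \<in> R \<and> y \<in> R \<and> adjacent n x y}"

definition graph_connected :: "nat \<Rightarrow> (nat \<Rightarrow> nat) set \<Rightarrow> bool" where
  "graph_connected n R \<longleftrightarrow> (\<forall>x\<in>R. \<forall>y\<in>R. (x, y) \<in> (sol_edges n R)\<^sup>*)"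

end

theory Submission
  imports Defs
begin

lemma sum12: "(\<Sum>j=1..2. f j) = f (1::nat) + (f 2 :: real)"
  by (simp add: numeral_2_eq_2)

lemma isolated_not_conn:
  assumes "p \<in> R" "q \<in> R" "p \<noteq> q" "\<forall>y\<in>R. \<not> adjacent n p y"
  shows "\<not> graph_connected n R"
proof
  assume "graph_connected n R"
  then have "(p, q) \<in> (sol_edges n R)\<^sup>*" using assms unfolding graph_connected_def by blast
  then show False
  proof (cases rule: converse_rtranclE)
    case base then show ?thesis using assms by simp
  next
    case (step y) then show ?thesis using assms unfolding sol_edges_def by blast
  qed
qed

lemma adj2:
  assumes "adjacent 2 p y"
  shows "(y 1 \<noteq> p 1 \<and> y 2 = p 2) \<or> (y 1 = p 1 \<and> y 2 \<noteq> p 2)"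
proof -
  have e: "{1..2::nat} = {1,2}" by auto
  have c: "card {j\<in>{1,2::nat}. p j \<noteq> y j} = 1" using assms unfolding adjacent_def e .
  have "\<not> (p 1 = y 1 \<and> p 2 = y 2)"
  proof
    assume h: "p 1 = y 1 \<and> p 2 = y 2"
    have "{j\<in>{1,2::nat}. p j \<noteq> y j} = {}" using h by auto
    then have "card {j\<in>{1,2::nat}. p j \<noteq> y j} = 0" by (simp only: card.empty)
    with c show False by simp
  qed
  moreover have "\<not> (p 1 \<noteq> y 1 \<and> p 2 \<noteq> y 2)"
  proof
    assume h: "p 1 \<noteq> y 1 \<and> p 2 \<noteq> y 2"
    have "{j\<in>{1,2::nat}. p j \<noteq> y j} = {1,2}" using h by auto
    then show False using c by simp
  qed
  ultimately show ?thesis by metis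
qed

definition pt :: "nat \<Rightarrow> nat \<Rightarrow> nat \<Rightarrow> nat" where
  "pt u v = (\<lambda>j. if j = 1 then u else if j = 2 then v else 0)"

lemma pt_box: "u \<le> d \<Longrightarrow> v \<le> d \<Longrightarrow> pt u v \<in> box d 2"
  unfolding box_def pt_def by auto

lemma pt_app[simp]: "pt u v 1 = u" "pt u v 2 = v"
  unfolding pt_def by auto

lemma pt_neq: "pt u v = pt u' v' \<Longrightarrow> u = u' \<and> v = v'"
  by (metis pt_app)

lemma solset_iff: "x \<in> solset d A m 2 b \<longleftrightarrow> x \<in> box d 2 \<and>
   (\<forall>i\<in>{1..m}. A i 1 * real (x 1) + A i 2 * real (x 2) \<ge> b i)"
  unfolding solset_def sum12 by simp

lemma noEO:
  assumes "\<not> has_EO A m 2"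
  shows "\<not> can_elim A m {1,2} 1" "\<not> can_elim A m {1,2} 2"
proof -
  have ce: "can_elim A m {j} j" for j unfolding can_elim_def by auto
  have e: "{1..2::nat} = {1,2}" by auto
  have t: "(\<forall>t<2. P t) \<longleftrightarrow> P 0 \<and> P (1::nat)" for P by (auto simp: less_2_cases_iff)
  show "\<not> can_elim A m {1,2} 1"
  proof
    assume "can_elim A m {1,2} 1"
    then have "is_EO A m 2 [1,2]" unfolding is_EO_def e t
      using ce[of 2] by (simp add: insert_Diff_if)
    then show False using assms unfolding has_EO_def by blast
  qed
  show "\<not> can_elim A m {1,2} 2"
  proof
    assume "can_elim A m {1,2} 2"
    then have "is_EO A m 2 [2,1]" unfolding is_EO_def e t
      using ce[of 1] by (auto simp: insert_Diff_if insert_commute)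
    then show False using assms unfolding has_EO_def by blast
  qed
qed

theorem lemma5:
  fixes d m :: nat and A :: "nat \<Rightarrow> nat \<Rightarrow> real"
  assumes "d > 0"
    and "\<not> has_EO A m 2"
  shows "\<exists>b :: nat \<Rightarrow> real. \<not> graph_connected 2 (solset d A m 2 b)"
proof -
  note n = noEO[OF assms(2)]
  have "\<exists>i\<in>{1..m}. A i 1 > 0 \<and> A i 2 \<noteq> 0" using n(1) unfolding can_elim_def by auto
  then obtain i where i: "i \<in> {1..m}" "A i 1 > 0" "A i 2 \<noteq> 0" by blast
  have "\<exists>i\<in>{1..m}. A i 1 < 0 \<and> A i 2 \<noteq> 0" using n(1) unfolding can_elim_def by auto
  then obtain k where k: "k \<in> {1..m}" "A k 1 < 0" "A k 2 \<noteq> 0" by blast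
  have "\<exists>i\<in>{1..m}. A i 2 > 0 \<and> A i 1 \<noteq> 0" using n(2) unfolding can_elim_def by auto
  then obtain i' where i': "i' \<in> {1..m}" "A i' 2 > 0" "A i' 1 \<noteq> 0" by blast
  have "\<exists>i\<in>{1..m}. A i 2 < 0 \<and> A i 1 \<noteq> 0" using n(2) unfolding can_elim_def by auto
  then obtain k' where k': "k' \<in> {1..m}" "A k' 2 < 0" "A k' 1 \<noteq> 0" by blast
  have d1: "1 \<le> d" using assms(1) by simp
  have d1r: "(1::nat) \<le> d" using d1 .
  show ?thesis
  proof (cases "(\<exists>a\<in>{1..m}. A a 1 > 0 \<and> A a 2 > 0) \<and> (\<exists>c\<in>{1..m}. A c 1 < 0 \<and> A c 2 < 0)")
    case True
    then obtain a c where a: "a \<in> {1..m}" "A a 1 > 0" "A a 2 > 0"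
      and c: "c \<in> {1..m}" "A c 1 < 0" "A c 2 < 0" by blast
    define b where "b = (\<lambda>i. min (A i 1) (A i 2))"
    let ?R = "solset d A m 2 b"
    have p10: "pt 1 0 \<in> ?R" "pt 0 1 \<in> ?R"
      unfolding solset_iff b_def using pt_box d1 by (auto simp: pt_def)
    have ne: "pt 1 0 \<noteq> pt 0 1" using pt_neq by fastforce
    show ?thesis
    proof (cases "A c 1 \<le> A c 2")
      case le: True
      have "\<forall>y\<in>?R. \<not> adjacent 2 (pt 1 0) y"
      proof (intro ballI notI)
        fix y assume y: "y \<in> ?R" and adj: "adjacent 2 (pt 1 0) y"
        have ra: "A a 1 * real (y 1) + A a 2 * real (y 2) \<ge> b a"
          and rc: "A c 1 * real (y 1) + A c 2 * real (y 2) \<ge> b c"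
          using y a c unfolding solset_iff by auto
        from adj2[OF adj] consider "y 1 \<noteq> 1" "y 2 = 0" | "y 1 = 1" "y 2 \<noteq> 0" by (auto simp: pt_def)
        then show False
        proof cases
          case 1
          show False
          proof (cases "y 1 = 0")
            case True then show False using ra 1 a unfolding b_def by auto
          next
            case False
            then have "real (y 1) \<ge> 2" using 1 by linarith
            then have "A c 1 * real (y 1) \<le> A c 1 * 2" using c by (simp add: mult_left_mono_neg)
            then show False using rc 1 c le unfolding b_def by (simp add: min_def split: if_splits; linarith)
          qed
        next
          case 2
          then have "real (y 2) \<ge> 1" by linarith
          then have "A c 2 * real (y 2) \<le> A c 2" using c
            by (metis mult.right_neutral mult_left_mono_neg less_imp_le)
          then show False using rc 2 c le unfolding b_def by (simp add: min_def split: if_splits; linarith)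
        qed
      qed
      then show ?thesis using isolated_not_conn[OF p10 ne] by blast
    next
      case lt: False
      have "\<forall>y\<in>?R. \<not> adjacent 2 (pt 0 1) y"
      proof (intro ballI notI)
        fix y assume y: "y \<in> ?R" and adj: "adjacent 2 (pt 0 1) y"
        have ra: "A a 1 * real (y 1) + A a 2 * real (y 2) \<ge> b a"
          and rc: "A c 1 * real (y 1) + A c 2 * real (y 2) \<ge> b c"
          using y a c unfolding solset_iff by auto
        from adj2[OF adj] consider "y 1 \<noteq> 0" "y 2 = 1" | "y 1 = 0" "y 2 \<noteq> 1" by (auto simp: pt_def)
        then show False
        proof cases
          case 2
          show False
          proof (cases "y 2 = 0")
            case True then show False using ra 2 a unfolding b_def by auto
          next
            case False
            then have "real (y 2) \<ge> 2" using 2 by linarith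
            then have "A c 2 * real (y 2) \<le> A c 2 * 2" using c by (simp add: mult_left_mono_neg)
            then show False using rc 2 c lt unfolding b_def by (simp add: min_def split: if_splits; linarith)
          qed
        next
          case 1
          then have "real (y 1) \<ge> 1" by linarith
          then have "A c 1 * real (y 1) \<le> A c 1" using c
            by (metis mult.right_neutral mult_left_mono_neg less_imp_le)
          moreover have "A c 2 * real (y 2) = A c 2" using 1 by simp
          moreover have "min (A c 1) (A c 2) = A c 2" using lt by simp
          ultimately show False using rc c unfolding b_def by linarith
        qed
      qed
      then show ?thesis using isolated_not_conn[OF p10(2) p10(1) ne[symmetric]] by blast
    qed
  next
    case False
    have "\<exists>a\<in>{1..m}. A a 1 > 0 \<and> A a 2 < 0"
      using False i k i' k' by (metis linorder_neqE_linordered_idom)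
    then obtain a where a: "a \<in> {1..m}" "A a 1 > 0" "A a 2 < 0" by blast
    have "\<exists>c\<in>{1..m}. A c 1 < 0 \<and> A c 2 > 0"
      using False i k i' k' by (metis linorder_neqE_linordered_idom)
    then obtain c where c: "c \<in> {1..m}" "A c 1 < 0" "A c 2 > 0" by blast
    define b where "b = (\<lambda>i. min 0 (A i 1 + A i 2))"
    let ?R = "solset d A m 2 b"
    have p10: "pt 0 0 \<in> ?R" "pt 1 1 \<in> ?R"
      unfolding solset_iff b_def using pt_box d1 by (auto simp: pt_def)
    have ne: "pt 0 0 \<noteq> pt 1 1" using pt_neq by fastforce
    have "\<forall>y\<in>?R. \<not> adjacent 2 (pt 0 0) y"
    proof (intro ballI notI)
      fix y assume y: "y \<in> ?R" and adj: "adjacent 2 (pt 0 0) y"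
      have ra: "A a 1 * real (y 1) + A a 2 * real (y 2) \<ge> b a"
        and rc: "A c 1 * real (y 1) + A c 2 * real (y 2) \<ge> b c"
        using y a c unfolding solset_iff by auto
      from adj2[OF adj] consider "y 1 \<noteq> 0" "y 2 = 0" | "y 1 = 0" "y 2 \<noteq> 0" by (auto simp: pt_def)
      then show False
      proof cases
        case 1
        then have "real (y 1) \<ge> 1" by linarith
        then have "A c 1 * real (y 1) \<le> A c 1" using c
          by (metis mult.right_neutral mult_left_mono_neg less_imp_le)
        moreover have "A c 2 * real (y 2) = 0" using 1 by simp
        moreover have "min 0 (A c 1 + A c 2) > A c 1" using c by (simp add: min_def)
        ultimately show False using rc unfolding b_def by linarith
      next
        case 2
        then have "real (y 2) \<ge> 1" by linarith
        then have "A a 2 * real (y 2) \<le> A a 2" using a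
          by (metis mult.right_neutral mult_left_mono_neg less_imp_le)
        moreover have "A a 1 * real (y 1) = 0" using 2 by simp
        moreover have "min 0 (A a 1 + A a 2) > A a 2" using a by (simp add: min_def)
        ultimately show False using ra unfolding b_def by linarith
      qed
    qed
    then show ?thesis using isolated_not_conn[OF p10 ne] by blast
  qed
qed

end
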